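(* Let $\mu\in\mathcal P_2(\mathbb R^d)$, $\psi\in T_\mu(\mathcal P_2(\mathbb R^d))$ and $\eta\in\mathcal P(C([0,1],\mathbb R^d))$ with $(e_0)_\#\eta=\mu$. Then there exists a parallel transport of $\psi$ along $\eta$.
   Context: $\mathcal P(O)$ denotes Borel probability measures on $O$; $\mathcal P_2(\mathbb R^d)$ those on $\mathbb R^d$ with finite second moment; $f_\#m$ is the image measure. $T_\mu(\mathcal P_2(\mathbb R^d))$ is the set of measurable maps $\psi:\mathbb R^d\to\mathcal P(\mathbb R^d)$, $x\mapsto\psi_x$, with $\int\int|z|^2\psi_x(dz)\mu(dx)<\infty$; such $\psi$ is identified with the measure $\mu(dx)\psi_x(dz)$ on $\mathbb R^{2d}$. For $t\in[0,1]$, $e_t$ is the evaluation map $w\mapsto w(t)$ on spaces of continuous curves. $\pi_1,\pi_2$ are the projections of $\mathbb R^d\times\mathbb R^d$. Let $p_1:C([0,1],\mathbb R^{2d})\to C([0,1],\mathbb R^d)$, $p_1(w)(t)=\pi_1(w(t))$; let $C^1_y([0,1],\mathbb R^{2d})$ be the set of continuous curves $w$ with $t\mapsto\pi_2(w(t))$ of class $C^1$, and on it $\partial_2(w)(t)=\frac{d}{dt}\pi_2(w(t))$. A parallel transport of $\psi\in T_\mu(\mathcal P_2(\mathbb R^d))$ along $\eta$ (with $(e_0)_\#\eta=\mu$) is a probability measure $\Psi$ on $C([0,1],\mathbb R^{2d})$ concentrated on $C^1_y([0,1],\mathbb R^{2d})$ such that $(p_1)_\#\Psi=\eta$, $(\partial_2)_\#\Psi=\delta_0$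 (Dirac mass at the zero curve), and $(e_0)_\#\Psi(dx,dz)=\mu(dx)\psi_x(dz)$. *)

theory Defs
  imports "HOL-Analysis.Analysis" "HOL-Probability.Probability"
begin

(* R^d is modelled by an arbitrary Euclidean space 'a, R^{2d} by 'a <times> 'a.
  C([0,1],X) is modelled inside the metric space of bounded continuous functions
  real <Rightarrow><^sub>C X (sup norm) as the closed subset of those functions that are constant
  outside [0,1]; this subset is isometric to C([0,1],X) with the uniform metric. *)

definition curves01 :: "(real \<Rightarrow>\<^sub>C 'b::metric_space) set" where
  "curves01 = {w. \<forall>t. apply_bcontfun w t = apply_bcontfun w (max 0 (min 1 t))}"

definition P2 :: "'a::euclidean_space measure \<Rightarrow> bool" where
  "P2 \<mu> \<longleftrightarrow> prob_space \<mu> \<and> sets \<mu> = sets borel \<and>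
     (\<integral>\<^sup>+ x. ennreal ((norm x)\<^sup>2) \<partial>\<mu>) < \<infinity>"

definition tangent :: "'a::euclidean_space measure \<Rightarrow> ('a \<Rightarrow> 'a measure) \<Rightarrow> bool" where
  "tangent \<mu> \<psi> \<longleftrightarrow> \<psi> \<in> borel \<rightarrow>\<^sub>M prob_algebra borel \<and>
     (\<integral>\<^sup>+ x. (\<integral>\<^sup>+ z. ennreal ((norm z)\<^sup>2) \<partial>(\<psi> x)) \<partial>\<mu>) < \<infinity>"

definition joint :: "'a::euclidean_space measure \<Rightarrow> ('a \<Rightarrow> 'a measure) \<Rightarrow> ('a \<times> 'a) measure" where
  "joint \<mu> \<psi> = \<mu> \<bind> (\<lambda>x. distr (\<psi> x) borel (\<lambda>z. (x, z)))"

definition ev :: "real \<Rightarrow> (real \<Rightarrow>\<^sub>C 'b::metric_space) \<Rightarrow> 'b" where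
  "ev t w = apply_bcontfun w t"

definition p1 :: "(real \<Rightarrow>\<^sub>C ('a::euclidean_space \<times> 'a)) \<Rightarrow> (real \<Rightarrow>\<^sub>C 'a)" where
  "p1 w = Bcontfun (\<lambda>t. fst (apply_bcontfun w t))"

definition C1y :: "(real \<Rightarrow>\<^sub>C ('a::euclidean_space \<times> 'a)) set" where
  "C1y = {w. w \<in> curves01 \<and> (\<exists>v. continuous_on {0..1} v \<and>
       (\<forall>t\<in>{0..1}. ((\<lambda>s. snd (apply_bcontfun w s)) has_vector_derivative v t) (at t within {0..1})))}"

definition D2 :: "(real \<Rightarrow>\<^sub>C ('a::euclidean_space \<times> 'a)) \<Rightarrow> real \<Rightarrow> 'a" where
  "D2 w t = vector_derivative (\<lambda>s. snd (apply_bcontfun w s)) (at t within {0..1})"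

definition parallel_transport ::
  "'a::euclidean_space measure \<Rightarrow> ('a \<Rightarrow> 'a measure) \<Rightarrow> (real \<Rightarrow>\<^sub>C 'a) measure
    \<Rightarrow> (real \<Rightarrow>\<^sub>C ('a \<times> 'a)) measure \<Rightarrow> bool" where
  "parallel_transport \<mu> \<psi> \<eta> \<Psi> \<longleftrightarrow>
     prob_space \<Psi> \<and> sets \<Psi> = sets borel \<and>
     (AE w in \<Psi>. w \<in> C1y) \<and>
     distr \<Psi> borel p1 = \<eta> \<and>
     (AE w in \<Psi>. \<forall>t\<in>{0..1}. D2 w t = 0) \<and>
     distr \<Psi> borel (ev 0) = joint \<mu> \<psi>"

end

theory Submission
  imports Defs
begin
definition HH :: "(real \<Rightarrow>\<^sub>C 'a::euclidean_space) \<times> 'a \<Rightarrow> (real \<Rightarrow>\<^sub>C ('a \<times> 'a))" where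
  "HH p = Bcontfun (\<lambda>t. (apply_bcontfun (fst p) t, snd p))"

lemma HH_in: "(\<lambda>t. (apply_bcontfun (w::real \<Rightarrow>\<^sub>C 'a) t, z::'a::euclidean_space)) \<in> bcontfun"
proof -
  obtain b where b: "\<And>t. norm (apply_bcontfun w t) \<le> b"
    using bounded_apply_bcontfun[of w] by (auto simp: bounded_iff)
  show ?thesis
    apply (rule bcontfun_normI[where b="b + norm z"])
     apply (intro continuous_intros; simp)
    using b norm_Pair_le order_trans add_right_mono by blast
qed

lemma HH_apply[simp]: "apply_bcontfun (HH (w,z)) t = (apply_bcontfun w t, z)"
  unfolding HH_def by (simp add: Bcontfun_inverse[OF HH_in])

lemma p1_apply[simp]: "apply_bcontfun (p1 w) t = fst (apply_bcontfun w t)"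
proof -
  have "(\<lambda>t. fst (apply_bcontfun w t)) \<in> bcontfun"
  proof -
    obtain b where b: "\<And>t. norm (apply_bcontfun w t) \<le> b"
      using bounded_apply_bcontfun[of w] by (auto simp: bounded_iff)
    show ?thesis
      apply (rule bcontfun_normI[where b="b"])
       apply (intro continuous_intros; simp)
      subgoal for t using b[of t] norm_fst_le[of "fst (apply_bcontfun w t)" "snd (apply_bcontfun w t)"] by simp
      done
  qed
  then show ?thesis unfolding p1_def by (simp add: Bcontfun_inverse)
qed

lemma HH_lip: "dist (HH p) (HH q) \<le> dist p q"
proof (rule dist_bound)
  fix t
  obtain w z w' z' where pq: "p = (w,z)" "q = (w',z')" by (cases p, cases q)
  have "dist (apply_bcontfun w t) (apply_bcontfun w' t) \<le> dist w w'" by (rule dist_bounded)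
  then show "dist (apply_bcontfun (HH p) t) (apply_bcontfun (HH q) t) \<le> dist p q"
    unfolding pq by (simp add: dist_Pair_Pair real_sqrt_le_iff power_mono)
qed

lemma p1_lip: "dist (p1 w) (p1 w') \<le> dist w w'"
proof (rule dist_bound)
  fix t
  show "dist (apply_bcontfun (p1 w) t) (apply_bcontfun (p1 w') t) \<le> dist w w'"
    using dist_bounded[of w t w'] dist_fst_le[of "apply_bcontfun w t" "apply_bcontfun w' t"] by simp
qed

lemma ev_lip: "dist (ev t w) (ev t w') \<le> dist w w'"
  unfolding ev_def by (rule dist_bounded)

lemma cont_HH: "continuous_on UNIV HH"
  by (rule lipschitz_on_continuous_on[where L=1]) (auto intro!: lipschitz_onI HH_lip)
lemma cont_p1: "continuous_on UNIV p1"
  by (rule lipschitz_on_continuous_on[where L=1]) (auto intro!: lipschitz_onI p1_lip)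
lemma cont_ev: "continuous_on UNIV (ev t)"
  by (rule lipschitz_on_continuous_on[where L=1]) (auto intro!: lipschitz_onI ev_lip)

lemma open_pair_borel:
  fixes GG :: "('x::topological_space \<times> 'y::second_countable_topology) set"
  assumes "open GG" shows "GG \<in> sets (borel \<Otimes>\<^sub>M borel)"
proof -
  obtain B :: "'y set set" where B: "countable B" "topological_basis B"
    using ex_countable_basis by blast
  define U where "U b = \<Union>{A. open A \<and> A \<times> b \<subseteq> GG}" for b
  have eq: "GG = (\<Union>b\<in>B. U b \<times> b)"
  proof
    show "GG \<subseteq> (\<Union>b\<in>B. U b \<times> b)"
    proof
      fix p assume "p \<in> GG"
      then obtain x y where p: "p = (x,y)" "(x,y) \<in> GG" by (cases p) auto
      obtain A V where AV0: "open A" "open V" "(x,y) \<in> A \<times> V" "A \<times> V \<subseteq> GG"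
        by (rule open_prod_elim[OF assms p(2)])
      then have AV: "open A" "open V" "x \<in> A" "y \<in> V" "A \<times> V \<subseteq> GG" by auto
      then obtain b where "b \<in> B" "y \<in> b" "b \<subseteq> V"
        using B(2) by (meson topological_basisE)
      then show "p \<in> (\<Union>b\<in>B. U b \<times> b)" using AV p unfolding U_def by blast
    qed
  qed (auto simp: U_def)
  have "U b \<times> b \<in> sets (borel \<Otimes>\<^sub>M borel)" if "b \<in> B" for b
    using that B(2) by (intro pair_measureI borel_open) (auto simp: U_def topological_basis_open)
  then show ?thesis unfolding eq using B(1) by (intro sets.countable_UN') auto
qed

lemma cont_meas_pair:
  fixes f :: "('x::topological_space \<times> 'y::second_countable_topology) \<Rightarrow> 'z::topological_space"
  assumes "continuous_on UNIV f" shows "f \<in> borel_measurable (borel \<Otimes>\<^sub>M borel)"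
proof (rule borel_measurableI)
  fix S :: "'z set" assume "open S"
  then have "open (f -` S)" using assms by (simp add: continuous_on_open_vimage)
  then show "f -` S \<inter> space (borel \<Otimes>\<^sub>M borel) \<in> sets (borel \<Otimes>\<^sub>M borel)"
    by (simp add: open_pair_borel space_pair_measure)
qed
lemma S_closed: "closed {w :: real \<Rightarrow>\<^sub>C ('a::euclidean_space \<times> 'a). w \<in> curves01 \<and>
    (\<forall>t. snd (apply_bcontfun w t) = snd (apply_bcontfun w 0))}"
proof -
  have c: "continuous_on UNIV (\<lambda>w::real \<Rightarrow>\<^sub>C ('a \<times> 'a). apply_bcontfun w t)" for t
    using cont_ev[of t] unfolding ev_def by simp
  have eq: "{w :: real \<Rightarrow>\<^sub>C ('a \<times> 'a). w \<in> curves01 \<and>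
    (\<forall>t. snd (apply_bcontfun w t) = snd (apply_bcontfun w 0))} =
    (\<Inter>t. {w. apply_bcontfun w t = apply_bcontfun w (max 0 (min 1 t))}) \<inter>
    (\<Inter>t. {w. snd (apply_bcontfun w t) = snd (apply_bcontfun w 0)})"
    by (auto simp: curves01_def)
  show ?thesis unfolding eq
    by (intro closed_Int closed_INT ballI closed_Collect_eq continuous_on_snd c)
qed

lemma S_sub: assumes "w \<in> curves01" "\<forall>t. snd (apply_bcontfun w t) = snd (apply_bcontfun w 0)"
  shows "w \<in> C1y \<and> (\<forall>t\<in>{0..1}. D2 w t = 0)"
proof -
  have f: "(\<lambda>s. snd (apply_bcontfun w s)) = (\<lambda>s. snd (apply_bcontfun w 0))"
    using assms(2) by auto
  have d: "((\<lambda>s. snd (apply_bcontfun w s)) has_vector_derivative 0) (at t within {0..1})" for t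
    unfolding f by (rule has_vector_derivative_const)
  have "w \<in> C1y" unfolding C1y_def using assms(1) d
    by (auto intro!: exI[of _ "\<lambda>_. 0"])
  moreover have "D2 w t = 0" if "t \<in> {0..1}" for t
    unfolding D2_def using vector_derivative_within_cbox[of 0 1 t, OF _ _ d[of t, folded cbox_interval]]
      that by (simp add: cbox_interval)
  ultimately show ?thesis by blast
qed

theorem mainTheorem2:
  fixes \<mu> :: "'a::euclidean_space measure"
    and \<psi> :: "'a \<Rightarrow> 'a measure"
    and \<eta> :: "(real \<Rightarrow>\<^sub>C 'a) measure"
  assumes "P2 \<mu>"
    and "tangent \<mu> \<psi>"
    and "prob_space \<eta>" and "sets \<eta> = sets borel" and "AE w in \<eta>. w \<in> curves01"
    and "distr \<eta> borel (ev 0) = \<mu>"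
  shows "\<exists>\<Psi>. parallel_transport \<mu> \<psi> \<eta> \<Psi>"
proof -
  note setsE = assms(4)
  have psiM: "\<psi> \<in> borel \<rightarrow>\<^sub>M prob_algebra borel" using assms(2) unfolding tangent_def by blast
  have psiS: "\<psi> \<in> borel \<rightarrow>\<^sub>M subprob_algebra borel" by (rule measurable_prob_algebraD[OF psiM])
  have psiP: "prob_space (\<psi> x)" for x
    using measurable_space[OF psiM, of x] by (simp add: space_prob_algebra)
  have psisets: "sets (\<psi> x) = sets borel" for x
    using measurable_space[OF psiM, of x] by (simp add: space_prob_algebra)
  have ev0M: "ev 0 \<in> borel_measurable (borel :: (real \<Rightarrow>\<^sub>C 'a) measure)"
    by (rule borel_measurable_continuous_onI[OF cont_ev])
  have ev0E: "ev 0 \<in> borel_measurable \<eta>" using ev0M measurable_cong_sets[OF setsE refl] by blast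
  have nE: "space \<eta> \<noteq> {}" using assms(3) prob_space.not_empty by blast
  define K where "K w = distr (\<psi> (ev 0 w)) (borel \<Otimes>\<^sub>M borel) (Pair w)" for w :: "real \<Rightarrow>\<^sub>C 'a"
  have PairM: "case_prod Pair \<in> measurable (\<eta> \<Otimes>\<^sub>M (borel::'a measure)) (borel \<Otimes>\<^sub>M borel)"
    by (simp add: measurable_cong_sets[OF sets_pair_measure_cong[OF setsE refl] refl])
  have KM: "K \<in> measurable \<eta> (subprob_algebra (borel \<Otimes>\<^sub>M borel))"
    unfolding K_def by (rule measurable_distr2[OF PairM measurable_compose[OF ev0E psiS]])
  have KP: "prob_space (K w)" for w
    unfolding K_def by (intro prob_space.prob_space_distr psiP) (simp add: measurable_Pair2' psisets measurable_cong_sets[OF psisets refl])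
  define Q where "Q = \<eta> \<bind> K"
  have Qsets: "sets Q = sets (borel \<Otimes>\<^sub>M borel)" unfolding Q_def by (rule sets_bind_measurable[OF KM nE])
  have QP: "prob_space Q" unfolding Q_def by (rule prob_space.prob_space_bind[OF assms(3) _ KM]) (simp add: KP)
  have HHM: "HH \<in> borel_measurable Q"
    using cont_meas_pair[OF cont_HH] measurable_cong_sets[OF Qsets refl] by blast
  define \<Psi> where "\<Psi> = distr Q borel HH"
  have "parallel_transport \<mu> \<psi> \<eta> \<Psi>"
    unfolding parallel_transport_def
  proof (intro conjI)
    show "prob_space \<Psi>" unfolding \<Psi>_def by (rule prob_space.prob_space_distr[OF QP HHM])
    show "sets \<Psi> = sets borel" unfolding \<Psi>_def by simp
    define S where "S = {w :: real \<Rightarrow>\<^sub>C ('a \<times> 'a). w \<in> curves01 \<and>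
      (\<forall>t. snd (apply_bcontfun w t) = snd (apply_bcontfun w 0))}"
    have Sb: "S \<in> sets borel" unfolding S_def by (rule borel_closed[OF S_closed])
    have pS: "Measurable.pred (borel \<Otimes>\<^sub>M borel) (\<lambda>p. HH p \<in> S)"
      by (rule pred_sets2[OF Sb cont_meas_pair[OF cont_HH]])
    have HHS: "HH (w, z) \<in> S" if "w \<in> curves01" for w z
      using that unfolding S_def curves01_def by auto
    have "AE p in Q. HH p \<in> S"
      unfolding Q_def
    proof (subst AE_bind[OF KM])
      show "Measurable.pred (borel \<Otimes>\<^sub>M borel) (\<lambda>p. HH p \<in> S)" by (rule pS)
      show "AE x in \<eta>. AE y in K x. HH y \<in> S"
        using assms(5)
      proof (rule eventually_mono)
        fix w :: "real \<Rightarrow>\<^sub>C 'a" assume w: "w \<in> curves01"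
        have PM: "Pair w \<in> measurable (\<psi> (ev 0 w)) (borel \<Otimes>\<^sub>M borel)"
          unfolding measurable_cong_sets[OF psisets[of "ev 0 w"] refl] by (rule measurable_Pair1') simp
        have "{x \<in> space (borel \<Otimes>\<^sub>M borel). HH x \<in> S} \<in> sets (borel \<Otimes>\<^sub>M borel)"
          using pS by (simp add: pred_def)
        then show "AE y in K w. HH y \<in> S"
          unfolding K_def by (subst AE_distr_iff[OF PM]) (auto intro!: AE_I2 HHS w)
      qed
    qed
    then have AS: "AE w in \<Psi>. w \<in> S"
      unfolding \<Psi>_def by (subst AE_distr_iff[OF HHM]) (auto simp: Sb)
    show "AE w in \<Psi>. w \<in> C1y"
      using AS by (rule eventually_mono) (use S_sub in \<open>auto simp: S_def\<close>)
    show "AE w in \<Psi>. \<forall>t\<in>{0..1}. D2 w t = 0"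
      using AS by (rule eventually_mono) (use S_sub in \<open>auto simp: S_def\<close>)
    show "distr \<Psi> borel p1 = \<eta>"
    proof -
      have p1M: "p1 \<in> borel_measurable (borel :: (real \<Rightarrow>\<^sub>C ('a \<times> 'a)) measure)"
        by (rule borel_measurable_continuous_onI[OF cont_p1])
      have fstM: "fst \<in> measurable (borel \<Otimes>\<^sub>M borel) (borel :: (real \<Rightarrow>\<^sub>C 'a) measure)"
        by (rule measurable_fst)
      have "distr \<Psi> borel p1 = distr Q borel (p1 \<circ> HH)"
        unfolding \<Psi>_def by (rule distr_distr[OF p1M HHM])
      also have "\<dots> = distr Q borel fst"
      proof (rule distr_cong)
        fix x assume "x \<in> space Q"
        obtain w z where "x = (w, z)" by (cases x)
        then show "(p1 \<circ> HH) x = fst x" by (auto intro!: bcontfun_eqI)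
      qed auto
      also have "\<dots> = \<eta> \<bind> (\<lambda>w. distr (K w) borel fst)"
        unfolding Q_def by (rule distr_bind[OF KM nE fstM])
      also have "\<dots> = \<eta> \<bind> return borel"
      proof (rule bind_cong[OF refl])
        fix w :: "real \<Rightarrow>\<^sub>C 'a" assume "w \<in> space \<eta>"
        have PM: "Pair w \<in> measurable (\<psi> (ev 0 w)) (borel \<Otimes>\<^sub>M borel)"
          unfolding measurable_cong_sets[OF psisets[of "ev 0 w"] refl] by (rule measurable_Pair1') simp
        have "distr (K w) borel fst = distr (\<psi> (ev 0 w)) borel (fst \<circ> Pair w)"
          unfolding K_def by (rule distr_distr[OF fstM PM])
        also have "\<dots> = distr (\<psi> (ev 0 w)) borel (\<lambda>_. w)" by (simp add: comp_def)
        also have "\<dots> = return borel w" by (rule prob_space.distr_const[OF psiP]) simp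
        finally show "distr (K w) borel fst = return borel w" .
      qed
      also have "\<dots> = \<eta>" by (rule bind_return''[OF setsE])
      finally show ?thesis .
    qed
    show "distr \<Psi> borel (ev 0) = joint \<mu> \<psi>"
    proof -
      let ?G = "\<lambda>p::(real \<Rightarrow>\<^sub>C 'a) \<times> 'a. (ev 0 (fst p), snd p)"
      have GM: "?G \<in> measurable (borel \<Otimes>\<^sub>M borel) borel"
        by (rule cont_meas_pair) (intro continuous_on_Pair continuous_on_compose2[OF cont_ev] continuous_on_fst continuous_on_snd continuous_on_id; simp)
      have JM: "(\<lambda>x. distr (\<psi> x) borel (Pair x)) \<in> measurable borel (subprob_algebra (borel :: ('a \<times> 'a) measure))"
      proof (rule measurable_distr2[OF _ psiS])
        show "(\<lambda>(x, y). (x, y)) \<in> (borel :: 'a measure) \<Otimes>\<^sub>M (borel :: 'a measure) \<rightarrow>\<^sub>M (borel :: ('a \<times> 'a) measure)"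
          unfolding borel_prod by (simp add: measurable_ident)
      qed
      have "distr \<Psi> borel (ev 0) = distr Q borel (ev 0 \<circ> HH)"
        unfolding \<Psi>_def by (rule distr_distr[OF borel_measurable_continuous_onI[OF cont_ev] HHM])
      also have "\<dots> = distr Q borel ?G"
      proof (rule distr_cong)
        fix x assume "x \<in> space Q"
        obtain w z where "x = (w, z)" by (cases x)
        then show "(ev 0 \<circ> HH) x = ?G x" by (auto simp: ev_def)
      qed auto
      also have "\<dots> = \<eta> \<bind> (\<lambda>w. distr (K w) borel ?G)"
        unfolding Q_def by (rule distr_bind[OF KM nE GM])
      also have "\<dots> = \<eta> \<bind> (\<lambda>w. distr (\<psi> (ev 0 w)) borel (Pair (ev 0 w)))"
      proof (rule bind_cong[OF refl])
        fix w :: "real \<Rightarrow>\<^sub>C 'a" assume "w \<in> space \<eta>"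
        have PM: "Pair w \<in> measurable (\<psi> (ev 0 w)) (borel \<Otimes>\<^sub>M borel)"
          unfolding measurable_cong_sets[OF psisets[of "ev 0 w"] refl] by (rule measurable_Pair1') simp
        have "distr (K w) borel ?G = distr (\<psi> (ev 0 w)) borel (?G \<circ> Pair w)"
          unfolding K_def by (rule distr_distr[OF GM PM])
        also have "\<dots> = distr (\<psi> (ev 0 w)) borel (Pair (ev 0 w))" by (simp add: comp_def)
        finally show "distr (K w) borel ?G = distr (\<psi> (ev 0 w)) borel (Pair (ev 0 w))" .
      qed
      also have "\<dots> = distr \<eta> borel (ev 0) \<bind> (\<lambda>x. distr (\<psi> x) borel (Pair x))"
        by (rule bind_distr[OF ev0E JM nE, symmetric])
      also have "\<dots> = joint \<mu> \<psi>" unfolding joint_def assms(6) ..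
      finally show ?thesis .
    qed
  qed
  then show ?thesis by blast
qed
end
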